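(* Let $\alpha\in[0,1)$ and let $$X(\sqrt{t},\alpha)=\{\sqrt{n}\,e^{2\pi i n\alpha}\ :\ n\in\mathbb{N}\}\subset\mathbb{C}.$$ The following four statements are equivalent: (a) $X(\sqrt{t},\alpha)$ is relatively dense; (b) $X(\sqrt{t},\alpha)$ is uniformly discrete; (c) $X(\sqrt{t},\alpha)$ is a Delone set; (d) $\alpha$ is badly approximable.
   Context: $\mathbb{C}$ is identified with $\mathbb{R}^2$, and $B(x,r)$ denotes the open disk of radius $r$ centered at $x$. A set $X\subset\mathbb{C}$ is $r$-relatively dense if $B(x,r)\cap X\neq\emptyset$ for every $x\in\mathbb{C}$, and relatively dense if it is $r$-relatively dense for some $r>0$. It is $s$-uniformly discrete if $\mathrm{Card}(B(x,s)\cap X)\le 1$ for every $x\in\mathbb{C}$, and uniformly discrete if this holds for some $s>0$. A Delone set is a set that is both relatively dense and uniformly discrete. A real number $\alpha$ is badly approximable if there is a constant $C>0$ with $q|q\alpha-p|\ge C$ for all $(p,q)\in\mathbb{Z}\times\mathbb{N}$. *)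

theory Defs
  imports "HOL-Analysis.Analysis"
begin

definition rel_dense_r :: "real \<Rightarrow> complex set \<Rightarrow> bool" where
  "rel_dense_r r X \<longleftrightarrow> (\<forall>x::complex. ball x r \<inter> X \<noteq> {})"

definition rel_dense :: "complex set \<Rightarrow> bool" where
  "rel_dense X \<longleftrightarrow> (\<exists>r>0. rel_dense_r r X)"

definition unif_discrete_s :: "real \<Rightarrow> complex set \<Rightarrow> bool" where
  "unif_discrete_s s X \<longleftrightarrow> (\<forall>x::complex. card (ball x s \<inter> X) \<le> 1 \<and> finite (ball x s \<inter> X))"

definition unif_discrete :: "complex set \<Rightarrow> bool" where
  "unif_discrete X \<longleftrightarrow> (\<exists>s>0. unif_discrete_s s X)"

definition delone :: "complex set \<Rightarrow> bool" where
  "delone X \<longleftrightarrow> rel_dense X \<and> unif_discrete X"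

definition badly_approximable :: "real \<Rightarrow> bool" where
  "badly_approximable \<alpha> \<longleftrightarrow>
     (\<exists>C>0. \<forall>(p::int) (q::nat). q \<ge> 1 \<longrightarrow> real q * \<bar>real q * \<alpha> - real_of_int p\<bar> \<ge> C)"

definition sqrt_spiral :: "real \<Rightarrow> complex set" where
  "sqrt_spiral \<alpha> = {complex_of_real (sqrt (real n)) * exp (2 * complex_of_real pi * \<i> * of_nat n * complex_of_real \<alpha>) | n::nat. n \<ge> 1}"

end

theory Submission
  imports Defs "HOL-Analysis.Kronecker_Approximation_Theorem"
begin

lemma sin_lower: fixes x :: real assumes "0 \<le> x" "x \<le> 2" shows "x / 3 \<le> sin x"
proof -
  have b: "\<bar>sin x - (\<Sum>m<3. sin_coeff m * x ^ m)\<bar> \<le> inverse (fact 3) * \<bar>x\<bar> ^ 3"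
    by (rule Maclaurin_sin_bound)
  have s: "(\<Sum>m<3. sin_coeff m * x ^ m) = x"
    by (simp add: numeral_3_eq_3 sin_coeff_Suc cos_coeff_def)
  have f: "inverse (fact 3 :: real) = 1/6"
    by (simp add: numeral_3_eq_3)
  have a: "\<bar>x\<bar> ^ 3 = x ^ 3" using assms by simp
  have c: "\<bar>sin x - x\<bar> \<le> x^3 / 6" using b unfolding s f a by simp
  have "x^2 \<le> 2^2" using assms by (intro power_mono) auto
  then have "x * x^2 \<le> x * 4" using assms by (intro mult_left_mono) auto
  then have "x^3 \<le> 4 * x" by (simp add: power3_eq_cube power2_eq_square mult_ac)
  with c show ?thesis by linarith
qed

lemma cis_diff_norm: "cmod (cis a - cis b) = 2 * \<bar>sin ((a - b) / 2)\<bar>"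
proof -
  define w where "w = (a - b) / 2"
  have ab: "a - b = 2 * w" by (simp add: w_def)
  have "(cmod (cis a - cis b))^2 = (cos a - cos b)^2 + (sin a - sin b)^2"
    by (simp add: cmod_power2)
  also have "\<dots> = 2 - 2 * (cos a * cos b + sin a * sin b)"
    using sin_cos_squared_add[of a] sin_cos_squared_add[of b] by (simp add: power2_eq_square algebra_simps)
  also have "\<dots> = 2 - 2 * cos (a - b)" by (simp add: cos_diff)
  also have "\<dots> = 2 - 2 * cos (2 * w)" by (simp only: ab)
  also have "\<dots> = (2 * \<bar>sin w\<bar>)^2" by (simp add: cos_double_sin power_mult_distrib)
  finally have "(cmod (cis a - cis b))^2 = (2 * \<bar>sin w\<bar>)^2" .
  then have "cmod (cis a - cis b) = 2 * \<bar>sin w\<bar>" by (rule power2_eq_imp_eq) auto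
  then show ?thesis by (simp add: w_def)
qed

lemma cis_diff_upper: "cmod (cis a - cis b) \<le> \<bar>a - b\<bar>"
  using abs_sin_x_le_abs_x[of "(a-b)/2"] by (simp add: cis_diff_norm)

lemma cis2pi_shift: "cis (2 * pi * (x - of_int j)) = cis (2 * pi * x)"
proof -
  have "cis (2 * pi * (x - of_int j)) = cis (2 * pi * x) * cis (2 * pi * of_int (-j))"
    by (simp add: cis_mult algebra_simps)
  also have "cis (2 * pi * of_int (-j)) = 1" by (rule cis_multiple_2pi) simp
  finally show ?thesis by simp
qed

lemma cis2pi_upper: "cmod (cis (2*pi*x) - cis (2*pi*y)) \<le> 2 * pi * \<bar>x - y - of_int j\<bar>"
proof -
  have "cmod (cis (2*pi*x) - cis (2*pi*y)) = cmod (cis (2*pi*(x - of_int j)) - cis (2*pi*y))"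
    by (simp add: cis2pi_shift)
  also have "\<dots> \<le> \<bar>2*pi*(x - of_int j) - 2*pi*y\<bar>" by (rule cis_diff_upper)
  also have "2*pi*(x - of_int j) - 2*pi*y = (2*pi) * (x - y - of_int j)" by (simp add: algebra_simps)
  also have "\<bar>(2*pi) * (x - y - of_int j)\<bar> = 2 * pi * \<bar>x - y - of_int j\<bar>" by (simp add: abs_mult)
  finally show ?thesis .
qed

lemma cis2pi_lower:
  assumes "\<And>j::int. \<delta> \<le> \<bar>x - y - of_int j\<bar>"
  shows "2 * \<delta> \<le> cmod (cis (2*pi*x) - cis (2*pi*y))"
proof -
  define j where "j = round (x - y)"
  define s where "s = x - y - of_int j"
  have s: "\<bar>s\<bar> \<le> 1/2" unfolding s_def j_def using of_int_round_abs_le[of "x-y"] by linarith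
  have d: "\<delta> \<le> \<bar>s\<bar>" using assms[of j] by (simp add: s_def)
  have "cmod (cis (2*pi*x) - cis (2*pi*y)) = cmod (cis (2*pi*(x - of_int j)) - cis (2*pi*y))"
    by (simp add: cis2pi_shift)
  also have "\<dots> = 2 * \<bar>sin ((2*pi*(x - of_int j) - 2*pi*y)/2)\<bar>" by (simp only: cis_diff_norm)
  also have "(2*pi*(x - of_int j) - 2*pi*y)/2 = pi * s" unfolding s_def by (simp add: field_simps)
  finally have eq: "cmod (cis (2*pi*x) - cis (2*pi*y)) = 2 * \<bar>sin (pi * s)\<bar>" .
  have "pi * \<bar>s\<bar> \<le> pi * (1/2)" using s by (intro mult_left_mono) auto
  then have le2: "pi * \<bar>s\<bar> \<le> 2" using pi_less_4 by linarith
  have "pi * \<bar>s\<bar> / 3 \<le> sin (pi * \<bar>s\<bar>)" by (rule sin_lower) (use le2 in auto)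
  moreover have "\<bar>sin (pi * s)\<bar> = sin (pi * \<bar>s\<bar>)"
  proof (cases "s \<ge> 0")
    case True
    moreover have "pi * s \<le> pi * 1" using s True by (intro mult_left_mono) auto
    moreover have "0 \<le> sin (pi * s)" using calculation True by (intro sin_ge_zero) auto
    ultimately show ?thesis by simp
  next
    case False
    then have "\<bar>s\<bar> = - s" by simp
    then have "sin (pi * \<bar>s\<bar>) = - sin (pi * s)" by simp
    moreover have "pi * \<bar>s\<bar> \<le> pi * 1" using s by (intro mult_left_mono) auto
    moreover have "0 \<le> sin (pi * \<bar>s\<bar>)" using calculation(2) by (intro sin_ge_zero) auto
    ultimately show ?thesis by simp
  qed
  moreover have "\<bar>s\<bar> \<le> pi * \<bar>s\<bar> / 3"
  proof -
    have "1 * \<bar>s\<bar> \<le> (pi/3) * \<bar>s\<bar>" by (intro mult_right_mono) (use pi_gt3 in auto)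
    then show ?thesis by simp
  qed
  ultimately show ?thesis using eq d by linarith
qed


lemma norm_lower1:
  fixes u v :: complex and a b :: real
  assumes "cmod u = 1" "cmod v = 1" "a \<ge> 0" "b \<ge> 0"
  shows "\<bar>a - b\<bar> \<le> cmod (of_real a * u - of_real b * v)"
proof -
  have "\<bar>cmod (of_real a * u) - cmod (of_real b * v)\<bar> \<le> cmod (of_real a * u - of_real b * v)"
    by (rule norm_triangle_ineq3)
  moreover have "cmod (of_real a * u) = a" "cmod (of_real b * v) = b"
    using assms by (simp_all add: norm_mult flip: of_real_diff)
  ultimately show ?thesis by simp
qed

lemma norm_split:
  fixes u v :: complex and a b :: real
  shows "of_real a * u - of_real b * v = of_real (a - b) * u + of_real b * (u - v)"
  by (simp add: algebra_simps)

lemma norm_lower2: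
  fixes u v :: complex and a b :: real
  assumes "cmod u = 1" "cmod v = 1" "a \<ge> 0" "b \<ge> 0"
  shows "b * cmod (u - v) - \<bar>a - b\<bar> \<le> cmod (of_real a * u - of_real b * v)"
proof -
  have "cmod (of_real b * (u - v)) - cmod (of_real (a - b) * u) \<le> cmod (of_real (a - b) * u + of_real b * (u - v))"
    by (metis add.commute norm_diff_ineq)
  moreover have "cmod (of_real b * (u - v)) = b * cmod (u - v)" "cmod (of_real (a - b) * u) = \<bar>a - b\<bar>"
    using assms by (simp_all add: norm_mult flip: of_real_diff)
  ultimately show ?thesis by (simp add: norm_split)
qed

lemma norm_upper:
  fixes u v :: complex and a b :: real
  assumes "cmod u = 1" "cmod v = 1" "a \<ge> 0" "b \<ge> 0"
  shows "cmod (of_real a * u - of_real b * v) \<le> \<bar>a - b\<bar> + b * cmod (u - v)"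
proof -
  have "cmod (of_real (a - b) * u + of_real b * (u - v)) \<le> cmod (of_real (a - b) * u) + cmod (of_real b * (u - v))"
    by (rule norm_triangle_ineq)
  moreover have "cmod (of_real b * (u - v)) = b * cmod (u - v)" "cmod (of_real (a - b) * u) = \<bar>a - b\<bar>"
    using assms by (simp_all add: norm_mult flip: of_real_diff)
  ultimately show ?thesis by (simp add: norm_split)
qed

definition Qp :: "real \<Rightarrow> real \<Rightarrow> complex" where
  "Qp r x = complex_of_real r * cis (2 * pi * x)"

lemma Q_upper:
  assumes "r1 \<ge> 0" "r2 \<ge> 0"
  shows "cmod (Qp r1 x - Qp r2 y) \<le> \<bar>r1 - r2\<bar> + r2 * (2 * pi * \<bar>x - y - of_int j\<bar>)"
proof -
  have "cmod (Qp r1 x - Qp r2 y) \<le> \<bar>r1 - r2\<bar> + r2 * cmod (cis (2*pi*x) - cis (2*pi*y))"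
    unfolding Qp_def by (rule norm_upper) (use assms in auto)
  also have "\<dots> \<le> \<bar>r1 - r2\<bar> + r2 * (2 * pi * \<bar>x - y - of_int j\<bar>)"
    using assms cis2pi_upper[of x y j] by (intro add_left_mono mult_left_mono) auto
  finally show ?thesis .
qed

lemma Q_lower1:
  assumes "r1 \<ge> 0" "r2 \<ge> 0"
  shows "\<bar>r1 - r2\<bar> \<le> cmod (Qp r1 x - Qp r2 y)"
  unfolding Qp_def by (rule norm_lower1) (use assms in auto)

lemma Q_lower2:
  assumes "r1 \<ge> 0" "r2 \<ge> 0" "\<And>j::int. \<delta> \<le> \<bar>x - y - of_int j\<bar>"
  shows "r2 * \<delta> \<le> cmod (Qp r1 x - Qp r2 y)"
proof -
  have a: "r2 * cmod (cis (2*pi*x) - cis (2*pi*y)) - \<bar>r1 - r2\<bar> \<le> cmod (Qp r1 x - Qp r2 y)"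
    unfolding Qp_def by (rule norm_lower2) (use assms in auto)
  have "r2 * (2 * \<delta>) \<le> r2 * cmod (cis (2*pi*x) - cis (2*pi*y))"
    using assms cis2pi_lower[of \<delta> x y] by (intro mult_left_mono) auto
  with a Q_lower1[OF assms(1,2), of x y] show ?thesis by linarith
qed

lemma norm_Qp: "r \<ge> 0 \<Longrightarrow> cmod (Qp r x) = r"
  by (simp add: Qp_def norm_mult)

definition Pt :: "real \<Rightarrow> nat \<Rightarrow> complex" where
  "Pt \<alpha> n = Qp (sqrt (real n)) (real n * \<alpha>)"

lemma spiral_eq: "sqrt_spiral \<alpha> = {Pt \<alpha> n | n. n \<ge> 1}"
  unfolding sqrt_spiral_def Pt_def Qp_def by (simp add: cis_conv_exp mult_ac)

lemma Pt_inj: "Pt \<alpha> n = Pt \<alpha> m \<Longrightarrow> n = m"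
proof -
  assume "Pt \<alpha> n = Pt \<alpha> m"
  then have "cmod (Pt \<alpha> n) = cmod (Pt \<alpha> m)" by simp
  then have "sqrt (real n) = sqrt (real m)" by (simp add: Pt_def norm_Qp)
  then show "n = m" by simp
qed


lemma subsingleton_card:
  assumes "\<And>a b. a \<in> S \<Longrightarrow> b \<in> S \<Longrightarrow> a = b"
  shows "finite S \<and> card S \<le> 1"
proof (cases "S = {}")
  case False
  then obtain a where "a \<in> S" by auto
  then have "S = {a}" using assms by auto
  then show ?thesis by simp
qed simp

lemma BA_sep:
  assumes C: "C > 0" "\<And>(p::int) (q::nat). q \<ge> 1 \<Longrightarrow> real q * \<bar>real q * \<alpha> - real_of_int p\<bar> \<ge> C"
  assumes nm: "1 \<le> n" "n < m"
  shows "min (1/4) C \<le> cmod (Pt \<alpha> m - Pt \<alpha> n)"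
proof -
  define q where "q = m - n"
  have q1: "q \<ge> 1" using nm by (simp add: q_def)
  have mq: "real m = real n + real q" using nm by (simp add: q_def)
  have sn1: "sqrt (real n) \<ge> 1" using nm by simp
  show ?thesis
  proof (cases "real n \<le> (real q)^2")
    case True
    have sq: "sqrt (real n) \<le> real q"
      using True by (metis of_nat_0_le_iff real_sqrt_le_iff real_sqrt_pow2 real_sqrt_unique sqrt_le_D)
    have "(sqrt (real n) + 1/4)^2 = real n + sqrt (real n) / 2 + 1/16"
      by (simp add: power2_eq_square algebra_simps)
    also have "\<dots> \<le> real m" using sq sn1 mq by linarith
    finally have "sqrt (real n) + 1/4 \<le> sqrt (real m)"
      by (simp add: real_le_rsqrt)
    then have "1/4 \<le> \<bar>sqrt (real m) - sqrt (real n)\<bar>" by linarith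
    also have "\<dots> \<le> cmod (Pt \<alpha> m - Pt \<alpha> n)" unfolding Pt_def by (rule Q_lower1) auto
    finally show ?thesis by linarith
  next
    case False
    have sq: "real q < sqrt (real n)"
      using False by (metis abs_of_nat real_less_rsqrt not_le) 
    have "\<And>j::int. C / real q \<le> \<bar>real m * \<alpha> - real n * \<alpha> - of_int j\<bar>"
    proof -
      fix j :: int
      have "C \<le> real q * \<bar>real q * \<alpha> - real_of_int j\<bar>" using C(2) q1 by blast
      moreover have "real m * \<alpha> - real n * \<alpha> = real q * \<alpha>" using mq by (simp add: algebra_simps)
      ultimately show "C / real q \<le> \<bar>real m * \<alpha> - real n * \<alpha> - of_int j\<bar>"
        using q1 by (simp add: field_simps)
    qed
    then have "sqrt (real n) * (C / real q) \<le> cmod (Pt \<alpha> m - Pt \<alpha> n)"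
      unfolding Pt_def by (rule Q_lower2[rotated 2]) auto
    moreover have "C \<le> sqrt (real n) * (C / real q)"
    proof -
      have "real q * C \<le> sqrt (real n) * C" using sq C(1) by (intro mult_right_mono) auto
      then show ?thesis using q1 by (simp add: field_simps)
    qed
    ultimately show ?thesis by linarith
  qed
qed

lemma BA_UD:
  assumes "badly_approximable \<alpha>"
  shows "unif_discrete (sqrt_spiral \<alpha>)"
proof -
  obtain C where C: "C > 0" "\<And>(p::int) (q::nat). q \<ge> 1 \<Longrightarrow> real q * \<bar>real q * \<alpha> - real_of_int p\<bar> \<ge> C"
    using assms unfolding badly_approximable_def by blast
  define s where "s = min (1/4) C"
  have s0: "s > 0" using C(1) by (simp add: s_def)
  have sep: "s \<le> dist (Pt \<alpha> n) (Pt \<alpha> m)" if "n \<ge> 1" "m \<ge> 1" "n \<noteq> m" for n m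
  proof (cases "n < m")
    case True
    then show ?thesis using BA_sep[OF C, of n m] that by (simp add: s_def dist_norm norm_minus_commute)
  next
    case False
    then have "m < n" using that by simp
    then show ?thesis using BA_sep[OF C, of m n] that by (simp add: s_def dist_norm)
  qed
  have "unif_discrete_s (s/2) (sqrt_spiral \<alpha>)"
    unfolding unif_discrete_s_def
  proof
    fix x :: complex
    show "card (ball x (s/2) \<inter> sqrt_spiral \<alpha>) \<le> 1 \<and> finite (ball x (s/2) \<inter> sqrt_spiral \<alpha>)"
    proof -
      have "a = b" if hab: "a \<in> ball x (s/2) \<inter> sqrt_spiral \<alpha>" "b \<in> ball x (s/2) \<inter> sqrt_spiral \<alpha>" for a b
      proof (rule ccontr)
        assume ne: "a \<noteq> b"
        obtain n m where a: "a = Pt \<alpha> n" "n \<ge> 1" and b: "b = Pt \<alpha> m" "m \<ge> 1"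
          using hab unfolding spiral_eq by blast
        have "n \<noteq> m" using ne a b by auto
        then have "s \<le> dist a b" using sep a b by simp
        moreover have "dist a b < s" using hab dist_triangle_half_r[of x a s b]
          by (auto simp: dist_commute) 
        ultimately show False by simp
      qed
      then show ?thesis using subsingleton_card by blast
    qed
  qed
  then show ?thesis unfolding unif_discrete_def using s0 by (intro exI[of _ "s/2"]) auto
qed


lemma UD_BA:
  assumes "unif_discrete (sqrt_spiral \<alpha>)"
  shows "badly_approximable \<alpha>"
proof (rule ccontr)
  assume nba: "\<not> badly_approximable \<alpha>"
  obtain s where s0: "s > 0" and us: "unif_discrete_s s (sqrt_spiral \<alpha>)"
    using assms unfolding unif_discrete_def by blast
  define k :: nat where "k = nat \<lceil>1 / s^2\<rceil> + 1"
  have k1: "k \<ge> 1" by (simp add: k_def)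
  have kgt: "real k > 1 / s^2" unfolding k_def by linarith
  have sk: "sqrt (real k) > 1 / s"
  proof -
    have "sqrt (1 / s^2) < sqrt (real k)" using kgt by simp
    moreover have "sqrt (1 / s^2) = 1 / s" using s0 by (simp add: real_sqrt_divide)
    ultimately show ?thesis by simp
  qed
  have skpos: "sqrt (real k) > 0" using k1 by simp
  have inv_sk: "1 / sqrt (real k) < s" using sk s0 skpos by (simp add: field_simps)
  define C where "C = s / (8 * pi * sqrt (real k))"
  have C0: "C > 0" using s0 skpos by (simp add: C_def)
  obtain p :: int and q :: nat where q1: "q \<ge> 1" and pq: "real q * \<bar>real q * \<alpha> - real_of_int p\<bar> < C"
    using nba C0 unfolding badly_approximable_def by (meson not_le)
  define n where "n = q^2 * k"
  define m where "m = n + q"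
  have n1: "n \<ge> 1" using q1 k1 by (simp add: n_def)
  have nm: "n \<noteq> m" using q1 by (simp add: m_def)
  have sqn: "sqrt (real n) = real q * sqrt (real k)"
    by (simp add: n_def real_sqrt_mult)
  have d1: "\<bar>sqrt (real m) - sqrt (real n)\<bar> < s / 2"
  proof -
    have t2: "sqrt (real k) ^ 2 = real k" by simp
    have "(real q * sqrt (real k) + 1 / (2 * sqrt (real k)))^2
       = (real q * sqrt (real k))^2 + (1 / (2 * sqrt (real k)))^2 + 2 * (real q * sqrt (real k)) * (1 / (2 * sqrt (real k)))"
      by (rule power2_sum)
    also have "(real q * sqrt (real k))^2 = real q ^2 * real k" by (simp add: power_mult_distrib)
    also have "2 * (real q * sqrt (real k)) * (1 / (2 * sqrt (real k))) = real q" using skpos by simp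
    also have "(1 / (2 * sqrt (real k)))^2 = 1 / (4 * real k)" by (simp add: power_divide power_mult_distrib)
    finally have "(real q * sqrt (real k) + 1 / (2 * sqrt (real k)))^2 = real q ^2 * real k + real q + 1 / (4 * real k)" by simp
    also have "\<dots> \<ge> real m" by (simp add: m_def n_def)
    finally have "sqrt (real m) \<le> real q * sqrt (real k) + 1 / (2 * sqrt (real k))"
      using skpos by (simp add: real_sqrt_le_iff real_le_lsqrt)
    moreover have "sqrt (real n) \<le> sqrt (real m)" by (simp add: m_def)
    moreover have "1 / (2 * sqrt (real k)) < s / 2" using inv_sk by simp
    ultimately show ?thesis using sqn by linarith
  qed
  have d2: "sqrt (real n) * (2 * pi * \<bar>real m * \<alpha> - real n * \<alpha> - of_int p\<bar>) \<le> s / 4"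
  proof -
    have e: "real m * \<alpha> - real n * \<alpha> = real q * \<alpha>" by (simp add: m_def algebra_simps)
    have "\<bar>real q * \<alpha> - of_int p\<bar> \<le> C / real q" using pq q1 by (simp add: field_simps)
    then have "sqrt (real n) * (2 * pi * \<bar>real q * \<alpha> - of_int p\<bar>) \<le> real q * sqrt (real k) * (2 * pi * (C / real q))"
      unfolding sqn using skpos by (intro mult_left_mono) auto
    also have "\<dots> = s / 4" using q1 skpos by (simp add: C_def field_simps)
    finally show ?thesis unfolding e .
  qed
  have "cmod (Pt \<alpha> m - Pt \<alpha> n) \<le> \<bar>sqrt (real m) - sqrt (real n)\<bar> + sqrt (real n) * (2 * pi * \<bar>real m * \<alpha> - real n * \<alpha> - of_int p\<bar>)"
    unfolding Pt_def by (rule Q_upper) auto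
  with d1 d2 have "cmod (Pt \<alpha> m - Pt \<alpha> n) < s" by linarith
  then have dist: "dist (Pt \<alpha> n) (Pt \<alpha> m) < s" by (simp add: dist_norm norm_minus_commute)
  define S where "S = ball (Pt \<alpha> n) s \<inter> sqrt_spiral \<alpha>"
  have inS: "Pt \<alpha> n \<in> S" "Pt \<alpha> m \<in> S"
    using dist s0 n1 unfolding S_def spiral_eq by (auto simp: m_def)
  have "finite S" "card S \<le> 1" using us unfolding unif_discrete_s_def S_def by auto
  then have "Pt \<alpha> n = Pt \<alpha> m" using inS card_le_Suc0_iff_eq[of S] by auto
  then show False using Pt_inj nm by blast
qed


lemma RD_BA:
  assumes "rel_dense (sqrt_spiral \<alpha>)"
  shows "badly_approximable \<alpha>"
proof (rule ccontr)
  assume nba: "\<not> badly_approximable \<alpha>"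
  obtain r0 where r00: "r0 > 0" and rd0: "rel_dense_r r0 (sqrt_spiral \<alpha>)"
    using assms unfolding rel_dense_def by blast
  define r where "r = max r0 1"
  have r1: "r \<ge> 1" by (simp add: r_def)
  have rd: "ball x r \<inter> sqrt_spiral \<alpha> \<noteq> {}" for x
  proof -
    have "ball x r0 \<subseteq> ball x r" by (simp add: r_def subset_ball)
    then show ?thesis using rd0 unfolding rel_dense_r_def by blast
  qed
  define C where "C = 1 / (36 * r^2)"
  have C0: "C > 0" using r1 by (simp add: C_def)
  obtain p :: int and q :: nat where q1: "q \<ge> 1" and pq: "real q * \<bar>real q * \<alpha> - real_of_int p\<bar> < C"
    using nba C0 unfolding badly_approximable_def by (meson not_le)
  have qpos: "real q > 0" using q1 by simp
  define \<eta> where "\<eta> = \<alpha> - of_int p / real q"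
  have eta: "\<bar>\<eta>\<bar> \<le> C / (real q)^2"
  proof -
    have "\<eta> * real q = real q * \<alpha> - of_int p" using qpos by (simp add: \<eta>_def field_simps)
    then have e1: "\<bar>\<eta>\<bar> * real q = \<bar>real q * \<alpha> - of_int p\<bar>" using qpos by (metis abs_mult abs_of_pos)
    have "\<bar>\<eta>\<bar> * (real q)^2 = real q * (\<bar>\<eta>\<bar> * real q)" by (simp add: power2_eq_square)
    also have "\<dots> \<le> C" using e1 pq by simp
    finally show ?thesis using qpos by (simp add: field_simps)
  qed
  define \<rho> where "\<rho> = 4 * r * real q"
  have rho0: "\<rho> \<ge> 0" using r1 qpos by (simp add: \<rho>_def)
  define \<phi> where "\<phi> = \<rho>^2 * \<eta> + 1 / (2 * real q)"
  obtain a where "a \<in> ball (Qp \<rho> \<phi>) r \<inter> sqrt_spiral \<alpha>" using rd by blast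
  then obtain n where n1: "n \<ge> 1" and dn: "dist (Qp \<rho> \<phi>) (Pt \<alpha> n) < r"
    unfolding spiral_eq by auto
  have dn': "cmod (Qp (sqrt (real n)) (real n * \<alpha>) - Qp \<rho> \<phi>) < r"
    using dn by (simp add: Pt_def dist_norm norm_minus_commute)
  show False
  proof (cases "\<bar>sqrt (real n) - \<rho>\<bar> \<ge> r")
    case True
    then show False using Q_lower1[of "sqrt (real n)" \<rho> "real n * \<alpha>" \<phi>] rho0 dn' by simp
  next
    case False
    have big: "\<bar>real n - \<rho>^2\<bar> \<le> 9 * r^2 * real q"
    proof -
      have "real n - \<rho>^2 = (sqrt (real n) - \<rho>) * (sqrt (real n) + \<rho>)"
        by (simp add: algebra_simps power2_eq_square)
      then have "\<bar>real n - \<rho>^2\<bar> = \<bar>sqrt (real n) - \<rho>\<bar> * (sqrt (real n) + \<rho>)"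
        using rho0 by (simp add: abs_mult)
      also have "\<dots> \<le> r * (2 * \<rho> + r)"
        using False rho0 by (intro mult_mono) auto
      also have "\<dots> = 8 * r^2 * real q + r^2" by (simp add: \<rho>_def power2_eq_square algebra_simps)
      also have "\<dots> \<le> 9 * r^2 * real q"
      proof -
        have "1 * r^2 \<le> real q * r^2" using q1 by (intro mult_right_mono) auto
        then show ?thesis by (simp add: algebra_simps)
      qed
      finally show ?thesis .
    qed
    have small: "\<bar>(real n - \<rho>^2) * \<eta>\<bar> \<le> 1 / (4 * real q)"
    proof -
      have "\<bar>(real n - \<rho>^2) * \<eta>\<bar> \<le> (9 * r^2 * real q) * (C / (real q)^2)"
        unfolding abs_mult using big eta by (intro mult_mono) auto
      also have "\<dots> = (9 * r^2 * C) / real q" using qpos by (simp add: power2_eq_square)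
      also have "9 * r^2 * C = 1/4" using r1 by (simp add: C_def)
      also have "(1/4) / real q = 1 / (4 * real q)" by simp
      finally show ?thesis .
    qed
    have sep: "1 / (4 * real q) \<le> \<bar>real n * \<alpha> - \<phi> - of_int j\<bar>" for j :: int
    proof -
      define N :: int where "N = 2 * int n * p - 1 - 2 * int q * j"
      have "odd N" by (simp add: N_def)
      then have "N \<noteq> 0" by auto
      then have N1: "1 \<le> \<bar>real_of_int N\<bar>" by linarith
      have eq: "real n * \<alpha> - \<phi> - of_int j = real_of_int N / (2 * real q) + (real n - \<rho>^2) * \<eta>"
        using qpos by (simp add: N_def \<phi>_def \<eta>_def field_simps)
      have "1 / (2 * real q) \<le> \<bar>real_of_int N\<bar> / (2 * real q)"
        by (rule divide_right_mono) (use N1 qpos in auto)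
      also have "\<dots> = \<bar>real_of_int N / (2 * real q)\<bar>" using qpos by (simp add: abs_divide)
      finally have "1 / (2 * real q) \<le> \<bar>real_of_int N / (2 * real q)\<bar>" .
      then show ?thesis unfolding eq using small by linarith
    qed
    have "\<rho> * (1 / (4 * real q)) \<le> cmod (Qp (sqrt (real n)) (real n * \<alpha>) - Qp \<rho> \<phi>)"
      by (rule Q_lower2) (use rho0 sep in auto)
    moreover have "\<rho> * (1 / (4 * real q)) = r" using qpos by (simp add: \<rho>_def)
    ultimately show False using dn' by simp
  qed
qed


lemma BA_RD:
  assumes "badly_approximable \<alpha>"
  shows "rel_dense (sqrt_spiral \<alpha>)"
proof -
  obtain C where C0: "C > 0" and C: "\<And>(p::int) (q::nat). q \<ge> 1 \<Longrightarrow> real q * \<bar>real q * \<alpha> - real_of_int p\<bar> \<ge> C"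
    using assms unfolding badly_approximable_def by blast
  define R where "R = 3 + 2 * pi * (1 / C + 2)"
  have R3: "R \<ge> 3" using C0 pi_gt3 by (simp add: R_def)
  have "ball z R \<inter> sqrt_spiral \<alpha> \<noteq> {}" for z
  proof (cases "cmod z < 2")
    case True
    have P1: "Pt \<alpha> 1 \<in> sqrt_spiral \<alpha>" unfolding spiral_eq by auto
    have "dist z (Pt \<alpha> 1) \<le> cmod z + cmod (Pt \<alpha> 1)" by (simp add: dist_norm norm_triangle_ineq4)
    moreover have "cmod (Pt \<alpha> 1) = 1" by (simp add: Pt_def norm_Qp)
    ultimately have "dist z (Pt \<alpha> 1) < R" using True R3 by linarith
    then show ?thesis using P1 by auto
  next
    case False
    define \<rho> where "\<rho> = cmod z"
    have rho2: "\<rho> \<ge> 2" using False by (simp add: \<rho>_def)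
    define Q where "Q = nat \<lfloor>\<rho>\<rfloor>"
    have Qle: "real Q \<le> \<rho>" and Qgt: "real Q > \<rho> - 1" using rho2 by (simp_all add: Q_def)
    have Q0: "Q > 0" using Qgt rho2 by linarith
    have Qpos: "real Q > 0" using Q0 by simp
    obtain h k where cop: "coprime h k" and k0: "0 < k" and kQ: "k \<le> int Q"
      and hk: "\<bar>of_int k * \<alpha> - of_int h\<bar> < 1 / real Q"
      using Dirichlet_approx_coprime[OF Q0, of \<alpha>] by blast
    define q where "q = nat k"
    have qk: "real q = real_of_int k" using k0 by (simp add: q_def)
    have q1: "q \<ge> 1" using k0 by (simp add: q_def)
    have kpos: "real_of_int k > 0" using k0 by simp
    have kQr: "real_of_int k \<le> real Q" using kQ by linarith
    have "C \<le> real q * \<bar>real q * \<alpha> - real_of_int h\<bar>" using C q1 by blast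
    also have "\<dots> < real q * (1 / real Q)" using hk qk kpos by (intro mult_strict_left_mono) auto
    finally have CQ: "C * real Q < real_of_int k" using Qpos qk by (simp add: field_simps)
    have rk: "\<rho> / real_of_int k \<le> 2 / C"
    proof -
      have "\<rho> \<le> 2 * real Q" using Qgt rho2 by linarith
      also have "2 * real Q \<le> 2 * (real_of_int k / C)" using CQ C0 by (simp add: field_simps)
      finally show ?thesis using kpos C0 by (simp add: field_simps)
    qed
    have rQ: "\<rho> / real Q \<le> 2"
    proof -
      have "\<rho> \<le> 2 * real Q" using Qgt rho2 by linarith
      then show ?thesis using Qpos by (simp add: field_simps)
    qed
    define \<phi> where "\<phi> = Arg z / (2 * pi)"
    have z: "z = Qp \<rho> \<phi>"
    proof -
      have "Qp \<rho> \<phi> = rcis (cmod z) (Arg z)" by (simp add: Qp_def rcis_def \<rho>_def \<phi>_def)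
      then show ?thesis by (simp add: rcis_cmod_Arg)
    qed
    define a :: nat where "a = nat \<lceil>\<rho>^2\<rceil>"
    have a1: "real a \<ge> \<rho>^2" and a2: "real a < \<rho>^2 + 1" by (simp_all add: a_def) linarith+
    define y where "y = \<phi> - real a * \<alpha>"
    define k0 where "k0 = round (real_of_int k * y)"
    have k0y: "\<bar>real_of_int k0 - real_of_int k * y\<bar> \<le> 1/2"
      unfolding k0_def using of_int_round_abs_le[of "real_of_int k * y"] by linarith
    obtain u v where uv: "u * h + v * k = 1"
      using bezout_int[of h k] cop by (auto simp: coprime_iff_gcd_eq_1)
    define D where "D = (k0 * u) div k"
    define i where "i = (k0 * u) mod k"
    have i0: "0 \<le> i" and ik: "i < k" using k0 by (simp_all add: i_def)
    have ieq: "i = k0 * u - D * k" unfolding i_def D_def by (simp add: minus_div_mult_eq_mod)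
    define t where "t = - (k0 * v + D * h)"
    have iht: "i * h = k0 + k * t"
    proof -
      have "i * h - (k0 + k * t) = k0 * (u * h + v * k - 1)" by (simp add: ieq t_def algebra_simps)
      then show ?thesis using uv by simp
    qed
    have ihtr: "real_of_int i * real_of_int h = real_of_int k0 + real_of_int k * real_of_int t"
      using arg_cong[OF iht, of real_of_int] by simp
    define n where "n = a + nat i"
    have nr: "real n = real a + real_of_int i" using i0 by (simp add: n_def)
    define \<eta> where "\<eta> = \<alpha> - real_of_int h / real_of_int k"
    have key: "real n * \<alpha> - \<phi> - real_of_int t = (real_of_int k0 / real_of_int k - y) + real_of_int i * \<eta>"
    proof -
      have "real_of_int i * \<alpha> = real_of_int i * real_of_int h / real_of_int k + real_of_int i * \<eta>"
        using kpos by (simp add: \<eta>_def field_simps)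
      also have "real_of_int i * real_of_int h / real_of_int k = real_of_int k0 / real_of_int k + real_of_int t"
        unfolding ihtr using kpos by (simp add: field_simps)
      finally have "real_of_int i * \<alpha> = real_of_int k0 / real_of_int k + real_of_int t + real_of_int i * \<eta>" .
      then show ?thesis unfolding nr y_def by (simp add: algebra_simps)
    qed
    have t1: "\<bar>real_of_int k0 / real_of_int k - y\<bar> \<le> 1 / (2 * real_of_int k)"
    proof -
      have "real_of_int k0 / real_of_int k - y = (real_of_int k0 - real_of_int k * y) / real_of_int k"
        using kpos by (simp add: field_simps)
      then have "\<bar>real_of_int k0 / real_of_int k - y\<bar> = \<bar>real_of_int k0 - real_of_int k * y\<bar> / real_of_int k"
        using kpos by (simp add: abs_divide)
      also have "\<dots> \<le> (1/2) / real_of_int k" using k0y kpos by (intro divide_right_mono) auto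
      finally show ?thesis by simp
    qed
    have t2: "\<bar>real_of_int i * \<eta>\<bar> \<le> 1 / real Q"
    proof -
      have "\<eta> * real_of_int k = real_of_int k * \<alpha> - real_of_int h" using kpos by (simp add: \<eta>_def field_simps)
      then have e1: "\<bar>\<eta>\<bar> * real_of_int k = \<bar>real_of_int k * \<alpha> - real_of_int h\<bar>"
        using kpos by (metis abs_mult abs_of_pos)
      have "\<bar>real_of_int i * \<eta>\<bar> = real_of_int i * \<bar>\<eta>\<bar>" using i0 by (simp add: abs_mult)
      also have "\<dots> \<le> real_of_int k * \<bar>\<eta>\<bar>" using ik by (intro mult_right_mono) auto
      also have "\<dots> \<le> 1 / real Q" using e1 hk by (simp add: mult.commute)
      finally show ?thesis .
    qed
    have angle: "\<bar>real n * \<alpha> - \<phi> - real_of_int t\<bar> \<le> 1 / (2 * real_of_int k) + 1 / real Q"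
      unfolding key using t1 t2 by linarith
    have rad: "\<bar>sqrt (real n) - \<rho>\<bar> \<le> 1"
    proof -
      have n_lo: "\<rho>^2 \<le> real n" using a1 i0 nr by linarith
      have "real n < \<rho>^2 + 1 + real_of_int k - 1" using a2 ik nr by linarith
      also have "\<dots> \<le> \<rho>^2 + \<rho>" using kQr Qle by linarith
      also have "\<dots> \<le> (\<rho> + 1)^2" using rho2 by (simp add: power2_eq_square algebra_simps)
      finally have n_hi: "real n \<le> (\<rho> + 1)^2" by linarith
      have "sqrt (\<rho>^2) \<le> sqrt (real n)" using n_lo by (simp only: real_sqrt_le_iff)
      then have s1: "\<rho> \<le> sqrt (real n)" using rho2 by simp
      have "sqrt (real n) \<le> sqrt ((\<rho> + 1)^2)" using n_hi by (simp only: real_sqrt_le_iff)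
      then have s2: "sqrt (real n) \<le> \<rho> + 1" using rho2 by simp
      show ?thesis using s1 s2 by linarith
    qed
    have "cmod (Qp (sqrt (real n)) (real n * \<alpha>) - Qp \<rho> \<phi>) \<le> \<bar>sqrt (real n) - \<rho>\<bar> + \<rho> * (2 * pi * \<bar>real n * \<alpha> - \<phi> - of_int t\<bar>)"
      by (rule Q_upper) (use rho2 in auto)
    also have "\<dots> \<le> 1 + \<rho> * (2 * pi * (1 / (2 * real_of_int k) + 1 / real Q))"
      using rad angle rho2 by (intro add_mono mult_left_mono) auto
    also have "\<rho> * (2 * pi * (1 / (2 * real_of_int k) + 1 / real Q)) = 2 * pi * ((\<rho> / real_of_int k) / 2 + \<rho> / real Q)"
      by (simp add: algebra_simps)
    also have "\<dots> \<le> 2 * pi * ((2 / C) / 2 + 2)"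
      using rk rQ by (intro mult_left_mono add_mono divide_right_mono) auto
    also have "1 + 2 * pi * ((2 / C) / 2 + 2) < R" by (simp add: R_def)
    finally have "dist z (Pt \<alpha> n) < R" unfolding z by (simp add: Pt_def dist_norm norm_minus_commute)
    moreover have "Pt \<alpha> n \<in> sqrt_spiral \<alpha>"
    proof -
      have "2 * 2 \<le> \<rho> * \<rho>" using rho2 by (intro mult_mono) auto
      then have "\<rho>^2 \<ge> 4" by (simp add: power2_eq_square)
      then have "real n \<ge> 1" using nr a1 i0 by linarith
      then show ?thesis unfolding spiral_eq by auto
    qed
    ultimately show ?thesis by auto
  qed
  then show ?thesis unfolding rel_dense_def rel_dense_r_def using R3 by (intro exI[of _ R]) auto
qed


theorem theorem2:
  fixes \<alpha> :: real
  assumes "0 \<le> \<alpha>" and "\<alpha> < 1"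
  shows "(rel_dense (sqrt_spiral \<alpha>) \<longleftrightarrow> unif_discrete (sqrt_spiral \<alpha>))
       \<and> (unif_discrete (sqrt_spiral \<alpha>) \<longleftrightarrow> delone (sqrt_spiral \<alpha>))
       \<and> (delone (sqrt_spiral \<alpha>) \<longleftrightarrow> badly_approximable \<alpha>)"
  using BA_RD[of \<alpha>] RD_BA[of \<alpha>] BA_UD[of \<alpha>] UD_BA[of \<alpha>] unfolding delone_def by blast

end
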